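(* Let $G$ be a simple graph on vertex set $\{x_1,\dots,x_n\}$ and let $e=x_ix_j$ be an edge of $G$. Then $$\big(I(G)^{(2)}:e\big)=I(G)+\big(x_px_q: x_p\in N_G(x_i),\ x_q\in N_G(x_j),\ x_p\neq x_q\big)+\big(x_t: x_t\in N_G(x_i)\cap N_G(x_j)\big).$$
   Context: $S=\mathbb{K}[x_1,\dots,x_n]$ over a field $\mathbb{K}$; vertices of $G$ are identified with variables and edges with the corresponding quadratic monomials. $I(G)=(x_ix_j : x_ix_j\in E(G))$ is the edge ideal. $N_G(x_i)=\{x_j : x_ix_j\in E(G)\}$. With $\mathcal{C}(G)$ the set of minimal vertex covers of $G$ and $\mathfrak{p}_C$ the ideal generated by the variables in $C$, the symbolic power is $I(G)^{(s)}=\bigcap_{C\in\mathcal{C}(G)}\mathfrak{p}_C^s$. *)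

theory Defs
  imports Main "HOL-Library.Poly_Mapping"
begin

text \<open>Polynomials over a field 'a in variables x_0, x_1, ...: finitely supported
  maps from monomials (finitely supported exponent vectors) to coefficients.
  The ring S = K[x_0,...,x_(n-1)] is the subset of polynomials only involving
  variables with index < n.\<close>

type_synonym 'a mpoly = "(nat \<Rightarrow>\<^sub>0 nat) \<Rightarrow>\<^sub>0 'a"

definition polyring :: "nat \<Rightarrow> ('a::field) mpoly set" where
  "polyring n = {p :: 'a mpoly. \<forall>m\<in>Poly_Mapping.keys p. Poly_Mapping.keys m \<subseteq> {..<n}}"

definition Var :: "nat \<Rightarrow> ('a::field) mpoly" where
  "Var i = Poly_Mapping.single (Poly_Mapping.single i 1) 1"

definition ideal_gen :: "'b::comm_ring_1 set \<Rightarrow> 'b set \<Rightarrow> 'b set" where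
  "ideal_gen R S = {x. \<exists>A f. finite A \<and> A \<subseteq> S \<and> (\<forall>a\<in>A. f a \<in> R) \<and> x = (\<Sum>a\<in>A. f a * a)}"

definition ideal_prod :: "'b::comm_ring_1 set \<Rightarrow> 'b set \<Rightarrow> 'b set \<Rightarrow> 'b set" where
  "ideal_prod R I J = ideal_gen R {a * b | a b. a \<in> I \<and> b \<in> J}"

fun ideal_pow :: "'b::comm_ring_1 set \<Rightarrow> 'b set \<Rightarrow> nat \<Rightarrow> 'b set" where
  "ideal_pow R I 0 = R"
| "ideal_pow R I (Suc s) = ideal_prod R (ideal_pow R I s) I"

definition colon :: "'b::comm_ring_1 set \<Rightarrow> 'b set \<Rightarrow> 'b \<Rightarrow> 'b set" where
  "colon R I f = {g \<in> R. g * f \<in> I}"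

definition simple_graph :: "nat \<Rightarrow> (nat \<Rightarrow> nat \<Rightarrow> bool) \<Rightarrow> bool" where
  "simple_graph n E \<longleftrightarrow> (\<forall>i j. E i j \<longrightarrow> i < n \<and> j < n \<and> i \<noteq> j \<and> E j i)"

definition edge_ideal :: "nat \<Rightarrow> (nat \<Rightarrow> nat \<Rightarrow> bool) \<Rightarrow> ('a::field) mpoly set" where
  "edge_ideal n E = ideal_gen (polyring n) {Var i * Var j | i j. E i j}"

definition vertex_cover :: "nat \<Rightarrow> (nat \<Rightarrow> nat \<Rightarrow> bool) \<Rightarrow> nat set \<Rightarrow> bool" where
  "vertex_cover n E C \<longleftrightarrow> C \<subseteq> {..<n} \<and> (\<forall>i j. E i j \<longrightarrow> i \<in> C \<or> j \<in> C)"

definition min_vertex_cover :: "nat \<Rightarrow> (nat \<Rightarrow> nat \<Rightarrow> bool) \<Rightarrow> nat set \<Rightarrow> bool" where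
  "min_vertex_cover n E C \<longleftrightarrow> vertex_cover n E C \<and> (\<forall>D. D \<subset> C \<longrightarrow> \<not> vertex_cover n E D)"

definition prime_of_cover :: "nat \<Rightarrow> nat set \<Rightarrow> ('a::field) mpoly set" where
  "prime_of_cover n C = ideal_gen (polyring n) (Var ` C)"

definition symbolic_power :: "nat \<Rightarrow> (nat \<Rightarrow> nat \<Rightarrow> bool) \<Rightarrow> nat \<Rightarrow> ('a::field) mpoly set" where
  "symbolic_power n E s = polyring n \<inter>
     \<Inter>{ideal_pow (polyring n) (prime_of_cover n C) s | C. min_vertex_cover n E C}"

end

theory Submission imports Defs begin

definition subr :: "'b::comm_ring_1 set \<Rightarrow> bool" where
  "subr R \<longleftrightarrow> 0 \<in> R \<and> 1 \<in> R \<and> (\<forall>x\<in>R. \<forall>y\<in>R. x + y \<in> R \<and> x * y \<in> R)"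

lemma ig_zero: "0 \<in> ideal_gen R S"
  unfolding ideal_gen_def by (rule CollectI, rule exI[of _ "{}"]) auto

lemma ig_add:
  assumes R: "subr R" and x: "x \<in> ideal_gen R S" and y: "y \<in> ideal_gen R S"
  shows "x + y \<in> ideal_gen R S"
proof -
  obtain A f where A: "finite A" "A \<subseteq> S" "\<forall>a\<in>A. f a \<in> R" "x = (\<Sum>a\<in>A. f a * a)"
    using x unfolding ideal_gen_def by blast
  obtain B g where B: "finite B" "B \<subseteq> S" "\<forall>a\<in>B. g a \<in> R" "y = (\<Sum>a\<in>B. g a * a)"
    using y unfolding ideal_gen_def by blast
  define h where "h a = (if a \<in> A then f a else 0) + (if a \<in> B then g a else 0)" for a
  have h: "\<forall>a\<in>A\<union>B. h a \<in> R" using R A B unfolding h_def subr_def by auto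
  have e1: "(\<Sum>a\<in>A\<union>B. (if a \<in> A then f a else 0) * a) = (\<Sum>a\<in>A. f a * a)"
    by (rule sum.mono_neutral_cong_right) (use A B in auto)
  have e2: "(\<Sum>a\<in>A\<union>B. (if a \<in> B then g a else 0) * a) = (\<Sum>a\<in>B. g a * a)"
    by (rule sum.mono_neutral_cong_right) (use A B in auto)
  have "x + y = (\<Sum>a\<in>A\<union>B. h a * a)"
    unfolding h_def distrib_right sum.distrib e1 e2 A(4) B(4) ..
  thus ?thesis unfolding ideal_gen_def using A B h by blast
qed

lemma ig_mult:
  assumes R: "subr R" and h: "h \<in> R" and x: "x \<in> ideal_gen R S"
  shows "h * x \<in> ideal_gen R S"
proof -
  obtain A f where A: "finite A" "A \<subseteq> S" "\<forall>a\<in>A. f a \<in> R" "x = (\<Sum>a\<in>A. f a * a)"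
    using x unfolding ideal_gen_def by blast
  have e: "h * x = (\<Sum>a\<in>A. (h * f a) * a)" unfolding A(4) sum_distrib_left by (simp add: mult.assoc)
  have r: "\<forall>a\<in>A. h * f a \<in> R" using A R h unfolding subr_def by auto
  show ?thesis unfolding ideal_gen_def
    by (intro CollectI exI[of _ A] exI[of _ "\<lambda>a. h * f a"]) (use A e r in auto)
qed

lemma ig_gen:
  assumes "h \<in> R" "s \<in> S"
  shows "h * s \<in> ideal_gen R S"
  unfolding ideal_gen_def using assms
  by (intro CollectI exI[of _ "{s}"] exI[of _ "\<lambda>_. h"]) auto

lemma ig_sum:
  assumes R: "subr R" and "finite A" and "\<forall>a\<in>A. g a \<in> ideal_gen R S"
  shows "sum g A \<in> ideal_gen R S"
  using assms(2,3) by (induction A rule: finite_induct) (auto simp: ig_zero ig_add[OF R])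

lemma subr_sum:
  assumes R: "subr R" and "finite A" and "\<forall>a\<in>A. g a \<in> R"
  shows "sum g A \<in> R"
  using assms(2,3) R by (induction A rule: finite_induct) (auto simp: subr_def)

lemma ig_sub:
  assumes R: "subr R" and "S \<subseteq> R"
  shows "ideal_gen R S \<subseteq> R"
proof
  fix x assume "x \<in> ideal_gen R S"
  then obtain A f where A: "finite A" "A \<subseteq> S" "\<forall>a\<in>A. f a \<in> R" "x = (\<Sum>a\<in>A. f a * a)"
    unfolding ideal_gen_def by blast
  show "x \<in> R" unfolding A(4) using A assms
    by (intro subr_sum) (auto simp: subr_def)
qed


lemma subr_polyring: "subr (polyring n :: ('a::field) mpoly set)"
proof -
  have add: "p + q \<in> polyring n" if "p \<in> polyring n" "q \<in> polyring n" for p q :: "'a mpoly"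
    using that keys_add[of p q] unfolding polyring_def by blast
  have mul: "p * q \<in> polyring n" if "p \<in> polyring n" "q \<in> polyring n" for p q :: "'a mpoly"
  proof -
    { fix m assume "m \<in> Poly_Mapping.keys (p * q)"
      then obtain a b where "m = a + b" "a \<in> Poly_Mapping.keys p" "b \<in> Poly_Mapping.keys q" using keys_mult[of p q] by blast
      hence "Poly_Mapping.keys m \<subseteq> {..<n}" using that keys_add[of a b] unfolding polyring_def by blast }
    thus ?thesis unfolding polyring_def by blast
  qed
  have z: "0 \<in> polyring n" by (simp add: polyring_def)
  have o: "1 \<in> polyring n" by (simp add: polyring_def)
  show ?thesis unfolding subr_def using z o add mul by blast
qed

lemma Var_in: "k < n \<Longrightarrow> Var k \<in> polyring n"
  by (auto simp: Var_def polyring_def)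


definition degC :: "nat set \<Rightarrow> (nat \<Rightarrow>\<^sub>0 nat) \<Rightarrow> nat" where
  "degC C m = (\<Sum>k\<in>C. Poly_Mapping.lookup m k)"

definition Qd :: "nat set \<Rightarrow> nat \<Rightarrow> ('a::field) mpoly \<Rightarrow> bool" where
  "Qd C d g \<longleftrightarrow> (\<forall>m\<in>Poly_Mapping.keys g. d \<le> degC C m)"

lemma degC_add: "degC C (a + b) = degC C a + degC C b"
  by (simp add: degC_def lookup_add sum.distrib)

lemma Qd_zero: "Qd C d 0" by (simp add: Qd_def)

lemma Qd_0: "Qd C 0 g" by (simp add: Qd_def)

lemma Qd_add: "Qd C d a \<Longrightarrow> Qd C d b \<Longrightarrow> Qd C d (a + b)"
  unfolding Qd_def using keys_add[of a b] by blast

lemma Qd_mult: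
  assumes "Qd C d a" "Qd C e b" shows "Qd C (d + e) (a * b)"
  unfolding Qd_def
proof
  fix m assume "m \<in> Poly_Mapping.keys (a * b)"
  then obtain u v where "m = u + v" "u \<in> Poly_Mapping.keys a" "v \<in> Poly_Mapping.keys b"
    using keys_mult[of a b] by blast
  with assms show "d + e \<le> degC C m" unfolding Qd_def by (simp add: degC_add add_mono)
qed

lemma Qd_multL: "Qd C d b \<Longrightarrow> Qd C d (a * b)"
  using Qd_mult[OF Qd_0[of C a]] by simp

lemma Qd_sum: "finite A \<Longrightarrow> \<forall>a\<in>A. Qd C d (g a) \<Longrightarrow> Qd C d (sum g A)"
  by (induction A rule: finite_induct) (auto simp: Qd_zero Qd_add)

lemma Qd_ig:
  assumes "\<forall>s\<in>S. Qd C d s" "x \<in> ideal_gen R S" shows "Qd C d x"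
proof -
  obtain A f where A: "finite A" "A \<subseteq> S" "x = (\<Sum>a\<in>A. f a * a)"
    using assms(2) unfolding ideal_gen_def by blast
  show ?thesis unfolding A(3) using A assms(1) by (intro Qd_sum) (auto intro!: Qd_multL)
qed

lemma degC_single: "finite C \<Longrightarrow> k \<in> C \<Longrightarrow> degC C (Poly_Mapping.single k 1) = 1"
  by (simp add: degC_def lookup_single when_def)

lemma Qd_Var: "finite C \<Longrightarrow> k \<in> C \<Longrightarrow> Qd C 1 (Var k :: ('a::field) mpoly)"
  unfolding Qd_def Var_def using degC_single[of C k] by simp

lemma Qd_pow:
  assumes C: "finite C"
  shows "x \<in> ideal_pow R (prime_of_cover n C) d \<Longrightarrow> Qd C d (x :: ('a::field) mpoly)"
proof (induction d arbitrary: x)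
  case 0 then show ?case by (simp add: Qd_0)
next
  case (Suc d)
  have P: "\<forall>b\<in>prime_of_cover n C. Qd C 1 (b :: 'a mpoly)"
    unfolding prime_of_cover_def using Qd_ig[of "Var ` C" C 1] Qd_Var[OF C] by blast
  have G: "\<forall>s\<in>{a * b | a b. a \<in> ideal_pow R (prime_of_cover n C) d \<and> b \<in> prime_of_cover n C}. Qd C (Suc d) s"
  proof
    fix s assume "s \<in> {a * b | a b. a \<in> ideal_pow R (prime_of_cover n C) d \<and> b \<in> prime_of_cover n C}"
    then obtain a b where ab: "s = a * b" "a \<in> ideal_pow R (prime_of_cover n C) d" "b \<in> prime_of_cover n C"
      by blast
    have "Qd C (d + 1) (a * b)" using Qd_mult[OF Suc.IH[OF ab(2)]] P ab(3) by blast
    then show "Qd C (Suc d) s" using ab(1) by simp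
  qed
  have "x \<in> ideal_gen R {a * b | a b. a \<in> ideal_pow R (prime_of_cover n C) d \<and> b \<in> prime_of_cover n C}"
    using Suc.prems by (simp add: ideal_prod_def)
  then show ?case by (rule Qd_ig[OF G])
qed


lemma mpoly_expand: "f = (\<Sum>m\<in>Poly_Mapping.keys f. Poly_Mapping.single m (Poly_Mapping.lookup f m))"
proof (rule poly_mapping_eqI)
  fix k
  show "Poly_Mapping.lookup f k = Poly_Mapping.lookup (\<Sum>m\<in>Poly_Mapping.keys f. Poly_Mapping.single m (Poly_Mapping.lookup f m)) k"
    by (simp add: lookup_sum lookup_single when_def in_keys_iff)
qed

lemma keys_mult_monom:
  fixes f :: "('a::field) mpoly"
  assumes "m \<in> Poly_Mapping.keys f"
  shows "m + u \<in> Poly_Mapping.keys (f * Poly_Mapping.single u 1)"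
proof -
  have "f * Poly_Mapping.single u 1 = (\<Sum>m\<in>Poly_Mapping.keys f. Poly_Mapping.single m (Poly_Mapping.lookup f m)) * Poly_Mapping.single u 1"
    using mpoly_expand[of f] by simp
  also have "\<dots> = (\<Sum>m\<in>Poly_Mapping.keys f. Poly_Mapping.single (m + u) (Poly_Mapping.lookup f m))"
    by (simp add: sum_distrib_right mult_single)
  finally have e: "f * Poly_Mapping.single u 1 = \<dots>" .
  have "Poly_Mapping.lookup (f * Poly_Mapping.single u 1) (m + u) = Poly_Mapping.lookup f m"
    unfolding e using assms by (simp add: lookup_sum lookup_single when_def)
  then show ?thesis using assms by (simp add: in_keys_iff)
qed

lemma dvd_one:
  assumes "t \<in> Poly_Mapping.keys (m :: nat \<Rightarrow>\<^sub>0 nat)"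
  shows "m = (m - Poly_Mapping.single t 1) + Poly_Mapping.single t 1"
proof (rule poly_mapping_eqI)
  fix k show "Poly_Mapping.lookup m k = Poly_Mapping.lookup (m - Poly_Mapping.single t 1 + Poly_Mapping.single t 1) k"
    using assms by (cases "k = t") (auto simp: lookup_add lookup_minus lookup_single in_keys_iff)
qed

lemma dvd_two:
  assumes "a \<in> Poly_Mapping.keys (m :: nat \<Rightarrow>\<^sub>0 nat)" "b \<in> Poly_Mapping.keys m" "a \<noteq> b"
  shows "m = (m - (Poly_Mapping.single a 1 + Poly_Mapping.single b 1)) + (Poly_Mapping.single a 1 + Poly_Mapping.single b 1)"
proof (rule poly_mapping_eqI)
  fix k show "Poly_Mapping.lookup m k = Poly_Mapping.lookup (m - (Poly_Mapping.single a 1 + Poly_Mapping.single b 1) + (Poly_Mapping.single a 1 + Poly_Mapping.single b 1)) k"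
    using assms by (cases "k = a"; cases "k = b") (auto simp: lookup_add lookup_minus lookup_single in_keys_iff)
qed

lemma keys_summand: "Poly_Mapping.keys (m' :: nat \<Rightarrow>\<^sub>0 nat) \<subseteq> Poly_Mapping.keys (m' + u)"
  by (auto simp: in_keys_iff lookup_add)

lemma degC_single': "finite C \<Longrightarrow> degC C (Poly_Mapping.single k 1) = (if k \<in> C then 1 else 0)"
  by (simp add: degC_def lookup_single when_def)

lemma degC_disj: "C \<inter> Poly_Mapping.keys m = {} \<Longrightarrow> degC C m = 0"
  unfolding degC_def by (rule sum.neutral) (auto simp: in_keys_iff)

lemma VarVar: "Var a * Var b = (Poly_Mapping.single (Poly_Mapping.single a 1 + Poly_Mapping.single b 1) 1 :: ('a::field) mpoly)"
  by (simp add: Var_def mult_single)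

lemma single_split: "Poly_Mapping.single (m' + u) c = Poly_Mapping.single m' c * (Poly_Mapping.single u 1 :: ('a::field) mpoly)"
  by (simp add: mult_single)

lemma exists_min_cover:
  "vertex_cover n E D \<Longrightarrow> \<exists>C\<subseteq>D. min_vertex_cover n E C"
proof (induction "card D" arbitrary: D rule: less_induct)
  case less
  show ?case
  proof (cases "min_vertex_cover n E D")
    case True then show ?thesis by blast
  next
    case False
    then obtain D' where D': "D' \<subset> D" "vertex_cover n E D'"
      using less.prems unfolding min_vertex_cover_def by blast
    have "finite D" using less.prems unfolding vertex_cover_def by (meson finite_lessThan finite_subset)
    then have "card D' < card D" using D'(1) psubset_card_mono by blast
    then obtain C where "C \<subseteq> D'" "min_vertex_cover n E C" using less.hyps D'(2) by blast
    then show ?thesis using D'(1) by blast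
  qed
qed

lemma cover_avoid:
  assumes G: "simple_graph n E" and xy: "E x y"
    and indep: "\<forall>a b. E a b \<longrightarrow> \<not> (a \<in> S \<and> b \<in> S)"
    and noy: "\<forall>s\<in>S. \<not> E y s"
  shows "\<exists>C. min_vertex_cover n E C \<and> C \<inter> S = {} \<and> x \<in> C \<and> y \<notin> C"
proof -
  define D where "D = {..<n} - S - {y}"
  have "vertex_cover n E D"
    unfolding vertex_cover_def D_def
  proof (intro conjI allI impI)
    fix a b assume ab: "E a b"
    then have "a < n" "b < n" "a \<noteq> b" "E b a" using G unfolding simple_graph_def by blast+
    then show "a \<in> {..<n} - S - {y} \<or> b \<in> {..<n} - S - {y}"
      using ab indep noy by auto
  qed auto
  then obtain C where C: "C \<subseteq> D" "min_vertex_cover n E C" using exists_min_cover by blast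
  have "y \<notin> C" using C(1) D_def by auto
  moreover have "x \<in> C \<or> y \<in> C" using C(2) xy unfolding min_vertex_cover_def vertex_cover_def by blast
  ultimately show ?thesis using C D_def by blast
qed


lemma min_cover_finite: "min_vertex_cover n E C \<Longrightarrow> finite C"
  unfolding min_vertex_cover_def vertex_cover_def by (meson finite_lessThan finite_subset)

lemma disj_lemma:
  assumes "\<not> (\<exists>p q. E i p \<and> E j q \<and> p \<noteq> q \<and> p \<in> S \<and> q \<in> S)"
    and "\<not> (\<exists>t. E i t \<and> E j t \<and> t \<in> S)"
  shows "(\<forall>s\<in>S. \<not> E j s) \<or> (\<forall>s\<in>S. \<not> E i s)"
  using assms by metis

lemma cover_exact:
  assumes G: "simple_graph n E" and e: "E i j"
    and indep: "\<forall>a b. E a b \<longrightarrow> \<not> (a \<in> S \<and> b \<in> S)"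
    and disj: "(\<forall>s\<in>S. \<not> E j s) \<or> (\<forall>s\<in>S. \<not> E i s)"
  shows "\<exists>C. min_vertex_cover n E C \<and> C \<inter> S = {} \<and>
              ((i \<in> C \<and> j \<notin> C) \<or> (j \<in> C \<and> i \<notin> C))"
proof (cases "\<forall>s\<in>S. \<not> E j s")
  case True
  from cover_avoid[OF G e indep True] show ?thesis by blast
next
  case False
  then have h: "\<forall>s\<in>S. \<not> E i s" using disj by blast
  have "E j i" using G e unfolding simple_graph_def by blast
  from cover_avoid[OF G this indep h] show ?thesis by blast
qed

lemma sub_dir:
  fixes f :: "('a::field) mpoly"
  assumes G: "simple_graph n E" and e: "E i j"
    and f: "f \<in> colon (polyring n) (symbolic_power n E 2) (Var i * Var j)"
  shows "f \<in> ideal_gen (polyring n)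
           ({Var a * Var b | a b. E a b}
            \<union> {Var p * Var q | p q. E i p \<and> E j q \<and> p \<noteq> q}
            \<union> {Var t | t. E i t \<and> E j t})"
    (is "f \<in> ideal_gen ?R ?Gens")
proof -
  have fR: "f \<in> ?R" and fs: "f * (Var i * Var j) \<in> symbolic_power n E 2"
    using f unfolding colon_def by auto
  have ij: "i \<noteq> j" "E j i" using G e unfolding simple_graph_def by blast+
  have Qall: "Qd C 2 (f * (Var i * Var j))" if "min_vertex_cover n E C" for C
  proof -
    have "f * (Var i * Var j) \<in> ideal_pow ?R (prime_of_cover n C) 2"
      using fs that unfolding symbolic_power_def by blast
    then show ?thesis using Qd_pow[OF min_cover_finite[OF that]] by blast
  qed
  have key: "Poly_Mapping.single m (Poly_Mapping.lookup f m) \<in> ideal_gen ?R ?Gens"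
    if m: "m \<in> Poly_Mapping.keys f" for m
  proof -
    define c where "c = Poly_Mapping.lookup f m"
    define S where "S = Poly_Mapping.keys m"
    have mn: "S \<subseteq> {..<n}" using fR m unfolding polyring_def S_def by blast
    have mon: "Poly_Mapping.single m' c \<in> ?R" if "Poly_Mapping.keys m' \<subseteq> S" for m'
      using that mn unfolding polyring_def by auto
    show ?thesis
    proof (cases "\<exists>a b. E a b \<and> a \<in> S \<and> b \<in> S")
      case True
      then obtain a b where ab: "E a b" "a \<in> S" "b \<in> S" by blast
      have "a \<noteq> b" using ab G unfolding simple_graph_def by blast
      define m' where "m' = m - (Poly_Mapping.single a 1 + Poly_Mapping.single b 1)"
      have mm: "m = m' + (Poly_Mapping.single a 1 + Poly_Mapping.single b 1)"
        using dvd_two[of a m b] ab \<open>a \<noteq> b\<close> unfolding m'_def S_def by blast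
      have eq: "Poly_Mapping.single m c = Poly_Mapping.single m' c * (Var a * Var b)"
        unfolding VarVar by (subst mm) (rule single_split)
      have mR: "Poly_Mapping.single m' c \<in> ?R"
        using mon keys_summand[of m'] mm unfolding S_def by metis
      have gm: "Var a * Var b \<in> {Var a * Var b | a b. E a b}" using ab by blast
      have "Poly_Mapping.single m' c * (Var a * Var b) \<in> ideal_gen ?R ?Gens" by (rule ig_gen[OF mR UnI1[OF UnI1[OF gm]]])
      then show ?thesis unfolding c_def[symmetric] eq .
    next
      case False1: False
      show ?thesis
      proof (cases "\<exists>p q. E i p \<and> E j q \<and> p \<noteq> q \<and> p \<in> S \<and> q \<in> S")
        case True
        then obtain a b where ab: "E i a" "E j b" "a \<noteq> b" "a \<in> S" "b \<in> S" by blast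
        define m' where "m' = m - (Poly_Mapping.single a 1 + Poly_Mapping.single b 1)"
        have mm: "m = m' + (Poly_Mapping.single a 1 + Poly_Mapping.single b 1)"
          using dvd_two[of a m b] ab unfolding m'_def S_def by blast
        have eq: "Poly_Mapping.single m c = Poly_Mapping.single m' c * (Var a * Var b)"
          unfolding VarVar by (subst mm) (rule single_split)
        have mR: "Poly_Mapping.single m' c \<in> ?R"
          using mon keys_summand[of m'] mm unfolding S_def by metis
        have gm: "Var a * Var b \<in> {Var p * Var q | p q. E i p \<and> E j q \<and> p \<noteq> q}" using ab by blast
        have "Poly_Mapping.single m' c * (Var a * Var b) \<in> ideal_gen ?R ?Gens" by (rule ig_gen[OF mR UnI1[OF UnI2[OF gm]]])
      then show ?thesis unfolding c_def[symmetric] eq .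
      next
        case False2: False
        show ?thesis
        proof (cases "\<exists>t. E i t \<and> E j t \<and> t \<in> S")
          case True
          then obtain t where t: "E i t" "E j t" "t \<in> S" by blast
          define m' where "m' = m - Poly_Mapping.single t 1"
          have mm: "m = m' + Poly_Mapping.single t 1"
            using dvd_one[of t m] t unfolding m'_def S_def by blast
          have eq: "Poly_Mapping.single m c = Poly_Mapping.single m' c * Var t"
            unfolding Var_def by (subst mm) (rule single_split)
          have mR: "Poly_Mapping.single m' c \<in> ?R"
            using mon keys_summand[of m'] mm unfolding S_def by metis
          have gm: "Var t \<in> {Var t | t. E i t \<and> E j t}" using t by blast
          have "Poly_Mapping.single m' c * (Var t) \<in> ideal_gen ?R ?Gens" by (rule ig_gen[OF mR UnI2[OF gm]])
      then show ?thesis unfolding c_def[symmetric] eq .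
        next
          case False3: False
          have indep: "\<forall>a b. E a b \<longrightarrow> \<not> (a \<in> S \<and> b \<in> S)" using False1 by blast
          have disj: "(\<forall>s\<in>S. \<not> E j s) \<or> (\<forall>s\<in>S. \<not> E i s)"
            by (rule disj_lemma[OF False2 False3])
          obtain C where C: "min_vertex_cover n E C" "C \<inter> S = {}"
              "(i \<in> C \<and> j \<notin> C) \<or> (j \<in> C \<and> i \<notin> C)"
            using cover_exact[OF G e indep disj] by blast
          have fin: "finite C" using min_cover_finite[OF C(1)] .
          have "m + (Poly_Mapping.single i 1 + Poly_Mapping.single j 1) \<in> Poly_Mapping.keys (f * (Var i * Var j))"
            unfolding VarVar by (rule keys_mult_monom[OF m])
          then have "2 \<le> degC C (m + (Poly_Mapping.single i 1 + Poly_Mapping.single j 1))"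
            using Qall[OF C(1)] unfolding Qd_def by blast
          moreover have "degC C (m + (Poly_Mapping.single i 1 + Poly_Mapping.single j 1)) = 1"
            using C(2,3) degC_disj[of C m] unfolding degC_add S_def degC_single'[OF fin]
            by (auto simp: Int_commute)
          ultimately show ?thesis by simp
        qed
      qed
    qed
  qed
  have "f = (\<Sum>m\<in>Poly_Mapping.keys f. Poly_Mapping.single m (Poly_Mapping.lookup f m))"
    by (rule mpoly_expand)
  also have "\<dots> \<in> ideal_gen ?R ?Gens"
    using key by (intro ig_sum[OF subr_polyring]) auto
  finally show ?thesis .
qed


lemma mulR: "p \<in> polyring n \<Longrightarrow> q \<in> polyring n \<Longrightarrow> (p * q :: ('a::field) mpoly) \<in> polyring n"
  using subr_polyring[where 'a='a] unfolding subr_def by blast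

lemma oneR: "(1 :: ('a::field) mpoly) \<in> polyring n"
  using subr_polyring[where 'a='a] unfolding subr_def by blast

lemma pow2_eq: "ideal_pow R I 2 = ideal_gen R {a * b | a b. a \<in> ideal_pow R I 1 \<and> b \<in> I}"
  by (simp add: numeral_2_eq_2 ideal_prod_def)

lemma pow2_mem:
  assumes "u \<in> C" "v \<in> C" "h \<in> polyring n"
  shows "h * Var u * Var v \<in> ideal_pow (polyring n) (prime_of_cover n C) 2"
proof -
  let ?R = "polyring n :: ('a::field) mpoly set"
  have P: "Var u \<in> prime_of_cover n C" "Var v \<in> prime_of_cover n C"
    unfolding prime_of_cover_def using ig_gen[OF oneR, of "Var u" "Var ` C" n] ig_gen[OF oneR, of "Var v" "Var ` C" n] assms
    by auto
  have "1 * (h * Var u) \<in> ideal_gen ?R {a * b | a b. a \<in> ideal_pow ?R (prime_of_cover n C) 0 \<and> b \<in> prime_of_cover n C}"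
    by (rule ig_gen[OF oneR]) (use assms P in auto)
  then have p1: "h * Var u \<in> ideal_pow ?R (prime_of_cover n C) 1"
    by (simp add: ideal_prod_def)
  have "1 * (h * Var u * Var v) \<in> ideal_gen ?R {a * b | a b. a \<in> ideal_pow ?R (prime_of_cover n C) 1 \<and> b \<in> prime_of_cover n C}"
    by (rule ig_gen[OF oneR]) (use p1 P in blast)
  then show ?thesis unfolding pow2_eq by simp
qed

lemma gen_case:
  assumes "u \<in> C" "v \<in> C" "r \<in> polyring n" "h \<in> polyring n" "y = Var u * Var v * r"
  shows "h * y \<in> ideal_pow (polyring n) (prime_of_cover n C) 2"
proof -
  have e: "h * y = (h * r) * Var u * Var v" using assms(5) by (simp add: ac_simps)
  show ?thesis unfolding e by (rule pow2_mem[OF assms(1,2) mulR[OF assms(4,3)]])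
qed

lemma cov: "min_vertex_cover n E C \<Longrightarrow> E a b \<Longrightarrow> a \<in> C \<or> b \<in> C"
  unfolding min_vertex_cover_def vertex_cover_def by blast

lemma gen_in_pow:
  fixes h :: "('a::field) mpoly"
  assumes G: "simple_graph n E" and e: "E i j" and C: "min_vertex_cover n E C"
    and h: "h \<in> polyring n"
    and g: "g \<in> {Var a * Var b | a b. E a b}
            \<union> {Var p * Var q | p q. E i p \<and> E j q \<and> p \<noteq> q}
            \<union> {Var t | t. E i t \<and> E j t}"
  shows "h * (g * (Var i * Var j)) \<in> ideal_pow (polyring n) (prime_of_cover n C) 2"
proof -
  have lt: "a < n \<and> b < n" if "E a b" for a b using G that unfolding simple_graph_def by blast
  have V: "Var a \<in> polyring n" if "E a b" for a b using lt[OF that] Var_in by blast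
  have V2: "Var b \<in> polyring n" if "E a b" for a b using lt[OF that] Var_in by blast
  have ij: "i \<in> C \<or> j \<in> C" using cov[OF C e] .
  have ji: "E j i" using G e unfolding simple_graph_def by blast
  from g consider (ed) a b where "g = Var a * Var b" "E a b"
    | (pq) p q where "g = Var p * Var q" "E i p" "E j q"
    | (t) t where "g = Var t" "E i t" "E j t"
    by blast
  then show ?thesis
  proof cases
    case ed
    have ab: "a \<in> C \<or> b \<in> C" using cov[OF C ed(2)] .
    have Rs: "Var a \<in> polyring n" "Var b \<in> polyring n" "Var i \<in> polyring n" "Var j \<in> polyring n"
      using V V2 ed(2) e by blast+
    from ab ij show ?thesis
    proof (elim disjE)
      assume a: "a \<in> C" "i \<in> C"
      show ?thesis by (rule gen_case[of a C i "Var b * Var j" n h]) (use a Rs h in \<open>auto simp: ed ac_simps intro!: mulR\<close>)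
    next
      assume a: "a \<in> C" "j \<in> C"
      show ?thesis by (rule gen_case[of a C j "Var b * Var i" n h]) (use a Rs h in \<open>auto simp: ed ac_simps intro!: mulR\<close>)
    next
      assume a: "b \<in> C" "i \<in> C"
      show ?thesis by (rule gen_case[of b C i "Var a * Var j" n h]) (use a Rs h in \<open>auto simp: ed ac_simps intro!: mulR\<close>)
    next
      assume a: "b \<in> C" "j \<in> C"
      show ?thesis by (rule gen_case[of b C j "Var a * Var i" n h]) (use a Rs h in \<open>auto simp: ed ac_simps intro!: mulR\<close>)
    qed
  next
    case pq
    have Rs: "Var p \<in> polyring n" "Var q \<in> polyring n" "Var i \<in> polyring n" "Var j \<in> polyring n"
      using V V2 pq(2,3) e by blast+
    consider "i \<in> C" "j \<in> C" | "i \<notin> C" "p \<in> C" "j \<in> C" | "j \<notin> C" "q \<in> C" "i \<in> C"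
      using cov[OF C pq(2)] cov[OF C pq(3)] ij by blast
    then show ?thesis
    proof cases
      case 1 show ?thesis by (rule gen_case[of i C j "Var p * Var q" n h]) (use 1 Rs h in \<open>auto simp: pq ac_simps intro!: mulR\<close>)
    next
      case 2 show ?thesis by (rule gen_case[of p C j "Var q * Var i" n h]) (use 2 Rs h in \<open>auto simp: pq ac_simps intro!: mulR\<close>)
    next
      case 3 show ?thesis by (rule gen_case[of q C i "Var p * Var j" n h]) (use 3 Rs h in \<open>auto simp: pq ac_simps intro!: mulR\<close>)
    qed
  next
    case t
    have Rs: "Var t \<in> polyring n" "Var i \<in> polyring n" "Var j \<in> polyring n"
      using V V2 t(2) e by blast+
    consider "i \<in> C" "j \<in> C" | "i \<notin> C" "t \<in> C" "j \<in> C" | "j \<notin> C" "t \<in> C" "i \<in> C"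
      using cov[OF C t(2)] cov[OF C t(3)] ij by blast
    then show ?thesis
    proof cases
      case 1 show ?thesis by (rule gen_case[of i C j "Var t" n h]) (use 1 Rs h in \<open>auto simp: t ac_simps intro!: mulR\<close>)
    next
      case 2 show ?thesis by (rule gen_case[of t C j "Var i" n h]) (use 2 Rs h in \<open>auto simp: t ac_simps intro!: mulR\<close>)
    next
      case 3 show ?thesis by (rule gen_case[of t C i "Var j" n h]) (use 3 Rs h in \<open>auto simp: t ac_simps intro!: mulR\<close>)
    qed
  qed
qed


lemma sup_dir:
  fixes x :: "('a::field) mpoly"
  assumes G: "simple_graph n E" and e: "E i j"
    and x: "x \<in> ideal_gen (polyring n)
           ({Var a * Var b | a b. E a b}
            \<union> {Var p * Var q | p q. E i p \<and> E j q \<and> p \<noteq> q}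
            \<union> {Var t | t. E i t \<and> E j t})"
    (is "x \<in> ideal_gen ?R ?Gens")
  shows "x \<in> colon (polyring n) (symbolic_power n E 2) (Var i * Var j)"
proof -
  have lt: "a < n \<and> b < n" if "E a b" for a b using G that unfolding simple_graph_def by blast
  have V: "Var a \<in> ?R" "Var b \<in> ?R" if "E a b" for a b using lt[OF that] Var_in by blast+
  have GR: "?Gens \<subseteq> ?R"
  proof
    fix g assume "g \<in> ?Gens"
    then consider (ed) a b where "g = Var a * Var b" "E a b"
      | (pq) p q where "g = Var p * Var q" "E i p" "E j q"
      | (t) t where "g = Var t" "E i t" "E j t"
      by blast
    then show "g \<in> ?R"
      by cases (use V in \<open>auto intro!: mulR\<close>)
  qed
  have xR: "x \<in> ?R" using ig_sub[OF subr_polyring GR] x by blast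
  have eR: "Var i * Var j \<in> ?R" using V[OF e] by (auto intro!: mulR)
  obtain A f where A: "finite A" "A \<subseteq> ?Gens" "\<forall>a\<in>A. f a \<in> ?R" "x = (\<Sum>a\<in>A. f a * a)"
    using x unfolding ideal_gen_def by blast
  have xe: "x * (Var i * Var j) = (\<Sum>a\<in>A. f a * (a * (Var i * Var j)))"
    unfolding A(4) sum_distrib_right by (simp add: mult.assoc)
  have P: "x * (Var i * Var j) \<in> ideal_pow ?R (prime_of_cover n C) 2"
    if C: "min_vertex_cover n E C" for C
  proof -
    have "(\<Sum>a\<in>A. f a * (a * (Var i * Var j))) \<in> ideal_pow ?R (prime_of_cover n C) 2"
      unfolding pow2_eq
    proof (rule ig_sum[OF subr_polyring A(1)], rule ballI)
      fix a assume a: "a \<in> A"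
      show "f a * (a * (Var i * Var j)) \<in> ideal_gen ?R {u * v | u v. u \<in> ideal_pow ?R (prime_of_cover n C) 1 \<and> v \<in> prime_of_cover n C}"
        using gen_in_pow[OF G e C, of "f a" a] A(2,3) a unfolding pow2_eq by blast
    qed
    then show ?thesis unfolding xe .
  qed
  have eR2: "x * (Var i * Var j) \<in> ?R" by (rule mulR[OF xR eR])
  show ?thesis unfolding colon_def symbolic_power_def using xR eR2 P by blast
qed

theorem lemma3p2:
  fixes n :: nat and E :: "nat \<Rightarrow> nat \<Rightarrow> bool" and i j :: nat
  assumes "simple_graph n E" and "E i j"
  shows "colon (polyring n) (symbolic_power n E 2 :: ('a::field) mpoly set) (Var i * Var j)
       = ideal_gen (polyring n)
           ({Var a * Var b | a b. E a b}
            \<union> {Var p * Var q | p q. E i p \<and> E j q \<and> p \<noteq> q}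
            \<union> {Var t | t. E i t \<and> E j t})"
  using sub_dir[OF assms] sup_dir[OF assms] by blast

end
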